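(* Let $t$ be a positive integer and let $M$ be a $t$-spike of order $r$. Then $r \ge 2t-1$.
   Context: For a positive integer $t$, a matroid $M$ is a $t$-spike of order $r$ (where $r\ge t$) if there is a partition $(A_1,\ldots,A_r)$ of $E(M)$ into 2-element sets (arms) such that, for every $t$-element subset $J\subseteq\{1,\dots,r\}$, the set $\bigcup_{j\in J}A_j$ is both a circuit and a cocircuit of $M$. *)

theory Defs
  imports Main
begin

definition matroid :: "'a set \<Rightarrow> ('a set \<Rightarrow> bool) \<Rightarrow> bool" where
  "matroid E indep \<longleftrightarrow>
     finite E \<and>
     (\<forall>X. indep X \<longrightarrow> X \<subseteq> E) \<and>
     indep {} \<and>
     (\<forall>X Y. indep X \<and> Y \<subseteq> X \<longrightarrow> indep Y) \<and>
     (\<forall>X Y. indep X \<and> indep Y \<and> card X < card Y \<longrightarrow>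
        (\<exists>y \<in> Y - X. indep (insert y X)))"

definition basis :: "'a set \<Rightarrow> ('a set \<Rightarrow> bool) \<Rightarrow> 'a set \<Rightarrow> bool" where
  "basis E indep B \<longleftrightarrow> indep B \<and> (\<forall>X. indep X \<and> B \<subseteq> X \<longrightarrow> X = B)"

definition circuit :: "'a set \<Rightarrow> ('a set \<Rightarrow> bool) \<Rightarrow> 'a set \<Rightarrow> bool" where
  "circuit E indep C \<longleftrightarrow> C \<subseteq> E \<and> \<not> indep C \<and> (\<forall>X. X \<subset> C \<longrightarrow> indep X)"

definition dual_indep :: "'a set \<Rightarrow> ('a set \<Rightarrow> bool) \<Rightarrow> 'a set \<Rightarrow> bool" where
  "dual_indep E indep X \<longleftrightarrow> X \<subseteq> E \<and> (\<exists>B. basis E indep B \<and> X \<inter> B = {})"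

definition cocircuit :: "'a set \<Rightarrow> ('a set \<Rightarrow> bool) \<Rightarrow> 'a set \<Rightarrow> bool" where
  "cocircuit E indep C \<longleftrightarrow> circuit E (dual_indep E indep) C"

definition is_spike :: "nat \<Rightarrow> nat \<Rightarrow> 'a set \<Rightarrow> ('a set \<Rightarrow> bool) \<Rightarrow> bool" where
  "is_spike t r E indep \<longleftrightarrow> t \<le> r \<and>
     (\<exists>A :: nat \<Rightarrow> 'a set.
        (\<forall>i < r. card (A i) = 2) \<and>
        (\<forall>i < r. \<forall>j < r. i \<noteq> j \<longrightarrow> A i \<inter> A j = {}) \<and>
        (\<Union>i \<in> {0..<r}. A i) = E \<and>
        (\<forall>J. J \<subseteq> {0..<r} \<and> card J = t \<longrightarrow>
            circuit E indep (\<Union>j \<in> J. A j) \<and> cocircuit E indep (\<Union>j \<in> J. A j)))"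

end

theory Submission
  imports Defs
begin

theorem lemma6p1:
  fixes E :: "'a set" and indep :: "'a set \<Rightarrow> bool" and t r :: nat
  assumes "0 < t"
    and "matroid E indep"
    and "is_spike t r E indep"
  shows "2 * t - 1 \<le> r"
proof -
  have tr: "t \<le> r" using assms(3) unfolding is_spike_def by blast
  obtain A :: "nat \<Rightarrow> 'a set" where
    A2: "\<forall>i < r. card (A i) = 2" and
    Ad: "\<forall>i < r. \<forall>j < r. i \<noteq> j \<longrightarrow> A i \<inter> A j = {}" and
    AE: "(\<Union>i \<in> {0..<r}. A i) = E" and
    AJ: "\<forall>J. J \<subseteq> {0..<r} \<and> card J = t \<longrightarrow>
            circuit E indep (\<Union>j \<in> J. A j) \<and> cocircuit E indep (\<Union>j \<in> J. A j)"
    using assms(3) unfolding is_spike_def by blast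
  have M: "finite E" "\<And>X. indep X \<Longrightarrow> X \<subseteq> E"
    "\<And>X Y. indep X \<Longrightarrow> indep Y \<Longrightarrow> card X < card Y \<Longrightarrow> (\<exists>y \<in> Y - X. indep (insert y X))"
    using assms(2) unfolding matroid_def by blast+
  define U where "U = (\<Union>j \<in> {0..<t}. A j)"
  have circ: "circuit E indep U" and cocirc: "cocircuit E indep U"
    using AJ[rule_format, of "{0..<t}"] tr unfolding U_def by auto
  have cU: "card U = 2 * t"
  proof -
    have "card U = (\<Sum>j\<in>{0..<t}. card (A j))"
      unfolding U_def
      apply (rule card_UN_disjoint)
      using A2 Ad tr by (auto intro: card_ge_0_finite)
    also have "\<dots> = (\<Sum>j\<in>{0..<t}. 2)" using A2 tr by (intro sum.cong) auto
    finally show ?thesis by simp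
  qed
  have cE: "card E = 2 * r"
  proof -
    have "card E = (\<Sum>j\<in>{0..<r}. card (A j))"
      unfolding AE[symmetric]
      apply (rule card_UN_disjoint)
      using A2 Ad by (auto intro: card_ge_0_finite)
    also have "\<dots> = (\<Sum>j\<in>{0..<r}. 2)" using A2 by (intro sum.cong) auto
    finally show ?thesis by simp
  qed
  have UE: "U \<subseteq> E" using circ unfolding circuit_def by blast
  have fU: "finite U" using UE M(1) finite_subset by blast
  have "U \<noteq> {}" using cU assms(1) by auto
  then obtain e where eU: "e \<in> U" by blast
  define X where "X = U - {e}"
  have XU: "X \<subset> U" using eU unfolding X_def by blast
  have iX: "indep X" using circ XU unfolding circuit_def by blast
  have cX: "card X = 2 * t - 1" using cU eU fU unfolding X_def by simp
  have "dual_indep E indep X" using cocirc XU unfolding cocircuit_def circuit_def by blast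
  then obtain B where bB: "basis E indep B" and XB: "X \<inter> B = {}"
    unfolding dual_indep_def by blast
  have iB: "indep B" using bB unfolding basis_def by blast
  have BE: "B \<subseteq> E" using M(2) iB .
  have Bsub: "B \<subseteq> (E - U) \<union> {e}" using BE XB unfolding X_def by blast
  have "card B \<le> card ((E - U) \<union> {e})"
    using Bsub M(1) by (intro card_mono) auto
  also have "\<dots> \<le> card (E - U) + 1" using card_Un_le[of "E - U" "{e}"] by simp
  also have "card (E - U) = 2 * r - 2 * t" using card_Diff_subset[OF fU UE] cE cU by simp
  finally have cB: "card B \<le> 2 * r - 2 * t + 1" .
  have "card X \<le> card B"
  proof (rule ccontr)
    assume "\<not> card X \<le> card B"
    then obtain y where "y \<in> X - B" "indep (insert y B)" using M(3)[OF iB iX] by auto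
    then show False using bB unfolding basis_def by blast
  qed
  then show ?thesis using cX cB tr by linarith
qed

end
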